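(* Consider a merge junction with incoming links $I_1=[a_1,b_1]$, $I_2$ and outgoing link $I_3$, with flow capacities $C_1,C_3>0$, and suppose the fundamental diagram of $I_1$ satisfies (F). Fix a split $\eta_1\in(0,1)$, a cycle length $\Delta_A>0$ and the signal control $u_1$ with cycle $\Delta_A$ and split $\eta_1$. Fix data $N_{ini}$ on $[a_1,b_1]$ and $N_{up}$ on $[0,T]$. Assume no spillback, i.e. the supply of $I_3$ is constant, $S_3(t)\equiv C_3$. Let $N^{\Delta_A}$ and $N^0$ be the Lax–Hopf solutions on $I_1$ with data $(N_{ini},N_{up},N^{\Delta_A}_{down})$ and $(N_{ini},N_{up},N^{0}_{down})$ respectively. Then $N^{\Delta_A}(t,x)\to N^0(t,x)$ uniformly on $[0,T]\times[a_1,b_1]$ as $\Delta_A\to0$ (with $\eta_1$, $N_{ini}$, $N_{up}$ fixed).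
   Context: Assumption (F): $f:[0,\rho_j]\to[0,C]$ continuous and concave, $f(0)=f(\rho_j)=0$, $C=\max f$; $v=f'(0+)$, $-w=f'(\rho_j-)$ finite; $f^*(u)=\sup_{\rho\in[0,\rho_j]}\{f(\rho)-u\rho\}$, $u\in[-w,v]$. Lax–Hopf solution on $[a,b]$ with data $(N_{ini},N_{up},N_{down})$: with $\mathcal{C}(0,x)=N_{ini}(x)$, $\mathcal{C}(s,a)=N_{up}(s)$, $\mathcal{C}(s,b)=N_{down}(s)$ (minimum at corners), $\mathcal{C}=+\infty$ elsewhere, set $N(t,x)=\inf_{u\in[-w,v],\tau\ge0}\{\mathcal{C}(t-\tau,x-\tau u)+\tau f^*(u)\}$. Signal control: $u_1:[0,T]\to\{0,1\}$ is $\Delta_A$-periodic and, for some offset $\theta$, $u_1(t)=1$ iff $(t-\theta)\bmod\Delta_A\in[0,\eta_1\Delta_A)$ (green time $\eta_1\Delta_A$ per cycle). Effective supply for $I_1$: $\mathcal{S}_3^1(t)=\min\{C_1,S_3(t)\}$. Downstream data: on-and-off model $N^{\Delta_A}_{down}(t)=\int_0^t\mathcal{S}^1_3(\tau)u_1(\tau)\,d\tau$; continuum model $N^0_{down}(t)=\int_0^t\eta_1\mathcal{S}^1_3(\tau)\,d\tau$. *)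

theory Defs
  imports "HOL-Analysis.Analysis"
begin

definition assumption_F :: "(real \<Rightarrow> real) \<Rightarrow> real \<Rightarrow> real \<Rightarrow> real \<Rightarrow> real \<Rightarrow> bool" where
  "assumption_F f rhoj C v w \<longleftrightarrow>
     0 < rhoj \<and>
     continuous_on {0..rhoj} f \<and>
     concave_on {0..rhoj} f \<and>
     (\<forall>\<rho>\<in>{0..rhoj}. 0 \<le> f \<rho> \<and> f \<rho> \<le> C) \<and>
     (\<exists>\<rho>\<in>{0..rhoj}. f \<rho> = C) \<and>
     f 0 = 0 \<and> f rhoj = 0 \<and>
     (f has_real_derivative v) (at 0 within {0..rhoj}) \<and>
     (f has_real_derivative (- w)) (at rhoj within {0..rhoj})"

definition fstar :: "(real \<Rightarrow> real) \<Rightarrow> real \<Rightarrow> real \<Rightarrow> real" where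
  "fstar f rhoj u = (SUP \<rho>\<in>{0..rhoj}. f \<rho> - u * \<rho>)"

definition value_cond ::
  "(real \<Rightarrow> real) \<Rightarrow> (real \<Rightarrow> real) \<Rightarrow> (real \<Rightarrow> real) \<Rightarrow> real \<Rightarrow> real \<Rightarrow> real \<Rightarrow> real \<Rightarrow> real \<Rightarrow> ereal" where
  "value_cond Nini Nup Ndown a b T s y =
     min (if s = 0 \<and> a \<le> y \<and> y \<le> b then ereal (Nini y) else \<infinity>)
      (min (if y = a \<and> 0 \<le> s \<and> s \<le> T then ereal (Nup s) else \<infinity>)
           (if y = b \<and> 0 \<le> s \<and> s \<le> T then ereal (Ndown s) else \<infinity>))"

definition lax_hopf ::
  "(real \<Rightarrow> real) \<Rightarrow> real \<Rightarrow> real \<Rightarrow> real \<Rightarrow> (real \<Rightarrow> real) \<Rightarrow> (real \<Rightarrow> real) \<Rightarrow> (real \<Rightarrow> real)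
     \<Rightarrow> real \<Rightarrow> real \<Rightarrow> real \<Rightarrow> real \<Rightarrow> real \<Rightarrow> ereal" where
  "lax_hopf f rhoj v w Nini Nup Ndown a b T t x =
     (INF p\<in>{-w..v} \<times> {0..}.
        value_cond Nini Nup Ndown a b T (t - snd p) (x - snd p * fst p)
        + ereal (snd p * fstar f rhoj (fst p)))"

definition signal :: "real \<Rightarrow> real \<Rightarrow> real \<Rightarrow> real \<Rightarrow> real" where
  "signal eta Delta theta t = (if frac ((t - theta) / Delta) < eta then 1 else 0)"

end

theory Submission
  imports Defs
begin

lemma vc_mono:
  assumes "\<And>s. Nd1 s \<le> Nd2 s + e" "e > 0"
  shows "value_cond Nini Nup Nd1 a b T s y \<le> value_cond Nini Nup Nd2 a b T s y + ereal e"
proof -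
  have h: "\<And>z::ereal. z \<le> z + ereal e" using assms(2)
    by (metis add.right_neutral add_left_mono ereal_less_eq(5) less_imp_le)
  have "(if y = b \<and> 0 \<le> s \<and> s \<le> T then ereal (Nd1 s) else \<infinity>) \<le>
        (if y = b \<and> 0 \<le> s \<and> s \<le> T then ereal (Nd2 s) else \<infinity>) + ereal e"
    using assms(1)[of s] by auto
  then show ?thesis unfolding value_cond_def
    by (smt (verit, ccfv_threshold) h min.absorb_iff2 min.bounded_iff min_add_distrib_right min_def order_trans)
qed

lemma lh_mono:
  assumes "\<And>s. Nd1 s \<le> Nd2 s + e" "e > 0"
  shows "lax_hopf f rhoj v w Nini Nup Nd1 a b T t x \<le> lax_hopf f rhoj v w Nini Nup Nd2 a b T t x + ereal e"
proof -
  let ?A = "{-w..v} \<times> {0::real..}"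
  let ?g1 = "\<lambda>p. value_cond Nini Nup Nd1 a b T (t - snd p) (x - snd p * fst p) + ereal (snd p * fstar f rhoj (fst p))"
  let ?g2 = "\<lambda>p. value_cond Nini Nup Nd2 a b T (t - snd p) (x - snd p * fst p) + ereal (snd p * fstar f rhoj (fst p))"
  have "\<And>p. p \<in> ?A \<Longrightarrow> (INF q\<in>?A. ?g1 q) - ereal e \<le> ?g2 p"
  proof -
    fix p assume p: "p \<in> ?A"
    have "(INF q\<in>?A. ?g1 q) \<le> ?g1 p" using p by (rule INF_lower)
    also have "\<dots> \<le> (value_cond Nini Nup Nd2 a b T (t - snd p) (x - snd p * fst p) + ereal e) + ereal (snd p * fstar f rhoj (fst p))"
      by (rule add_right_mono, rule vc_mono[OF assms])
    also have "\<dots> = ?g2 p + ereal e" by (simp add: ac_simps)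
    finally show "(INF q\<in>?A. ?g1 q) - ereal e \<le> ?g2 p" by (simp add: ereal_minus_le)
  qed
  then have "(INF q\<in>?A. ?g1 q) - ereal e \<le> (INF q\<in>?A. ?g2 q)" by (rule INF_greatest)
  then show ?thesis unfolding lax_hopf_def by (simp add: ereal_minus_le)
qed

definition PP :: "real \<Rightarrow> real \<Rightarrow> real" where "PP eta y = eta * of_int \<lfloor>y\<rfloor> + min (frac y) eta"

lemma PP_lip:
  assumes "0 < eta" "eta < 1" "y \<le> z"
  shows "0 \<le> PP eta z - PP eta y \<and> PP eta z - PP eta y \<le> z - y"
proof -
  define k where "k = \<lfloor>z\<rfloor> - \<lfloor>y\<rfloor>"
  have k0: "k \<ge> 0" using assms floor_mono unfolding k_def by auto
  have fy: "frac y = y - \<lfloor>y\<rfloor>" "0 \<le> frac y" "frac y < 1" using frac_lt_1[of y] frac_ge_0[of y] by (auto simp: frac_def)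
  have fz: "frac z = z - \<lfloor>z\<rfloor>" "0 \<le> frac z" "frac z < 1" using frac_lt_1[of z] frac_ge_0[of z] by (auto simp: frac_def)
  have d: "PP eta z - PP eta y = eta * real_of_int k + min (frac z) eta - min (frac y) eta"
    unfolding PP_def k_def by (simp add: algebra_simps)
  have zy: "z - y = real_of_int k + frac z - frac y" using fy fz unfolding k_def by simp
  show ?thesis
  proof (cases "k = 0")
    case True
    then have "frac y \<le> frac z" using zy assms by simp
    then show ?thesis using d zy True by auto
  next
    case False
    then have k1: "real_of_int k \<ge> 1" using k0 by simp
    have "eta * real_of_int k \<ge> eta" using k1 assms by simp
    moreover have "(1 - eta) * real_of_int k \<ge> 1 - eta" using k1 assms by simp
    moreover have "frac y - min (frac y) eta \<le> 1 - eta" using fy assms by (auto simp: min_def)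
    moreover have "min (frac z) eta \<le> frac z" "min (frac z) eta \<ge> 0" "min (frac y) eta \<le> eta"
      using fz assms by auto
    ultimately show ?thesis using d zy by (simp only: left_diff_distrib mult_1_left) linarith
  qed
qed

lemma PP_cont: assumes "0 < eta" "eta < 1" shows "continuous_on S (PP eta)"
proof -
  have "\<And>y z. dist (PP eta y) (PP eta z) \<le> dist y z"
  proof -
    fix y z
    show "dist (PP eta y) (PP eta z) \<le> dist y z"
    proof (cases "y \<le> z")
      case True then show ?thesis using PP_lip[OF assms True] by (simp add: dist_real_def)
    next
      case False then show ?thesis using PP_lip[OF assms, of z y] by (simp add: dist_real_def)
    qed
  qed
  then show ?thesis unfolding continuous_on_iff
    by (meson le_less_trans)
qed

lemma PP_deriv:
  assumes "0 < eta" "eta < 1" "frac y \<noteq> 0" "frac y \<noteq> eta"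
  shows "(PP eta has_real_derivative (if frac y < eta then 1 else 0)) (at y)"
proof (cases "frac y < eta")
  case True
  let ?S = "{real_of_int \<lfloor>y\<rfloor> <..< \<lfloor>y\<rfloor> + eta}"
  have fy: "frac y = y - \<lfloor>y\<rfloor>" "0 \<le> frac y" using frac_ge_0[of y] by (auto simp: frac_def)
  have "of_int \<lfloor>y\<rfloor> \<le> y" by (rule of_int_floor_le)
  moreover have "y \<noteq> of_int \<lfloor>y\<rfloor>" using fy assms(3) by auto
  ultimately have yS: "y \<in> ?S" unfolding greaterThanLessThan_iff using True fy by linarith
  have eq: "eta * of_int \<lfloor>y\<rfloor> + (z - of_int \<lfloor>y\<rfloor>) = PP eta z" if "z \<in> ?S" for z
  proof -
    have "\<lfloor>z\<rfloor> = \<lfloor>y\<rfloor>" using that assms by (intro floor_unique) auto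
    then show ?thesis using that unfolding PP_def by (auto simp: frac_def min_def)
  qed
  have "((\<lambda>z. eta * of_int \<lfloor>y\<rfloor> + (z - of_int \<lfloor>y\<rfloor>)) has_real_derivative 1) (at y)"
    by (auto intro!: derivative_eq_intros)
  from has_field_derivative_transform_within_open[OF this _ yS eq]
  show ?thesis using True by simp
next
  case False
  let ?S = "{real_of_int \<lfloor>y\<rfloor> + eta <..< \<lfloor>y\<rfloor> + 1}"
  have fy: "frac y = y - \<lfloor>y\<rfloor>" "frac y < 1" using frac_lt_1[of y] by (auto simp: frac_def)
  have yS: "y \<in> ?S" using False assms fy by auto
  have eq: "eta * of_int \<lfloor>y\<rfloor> + eta = PP eta z" if "z \<in> ?S" for z
  proof -
    have "\<lfloor>z\<rfloor> = \<lfloor>y\<rfloor>" using that assms by (intro floor_unique) auto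
    then show ?thesis using that unfolding PP_def by (auto simp: frac_def min_def)
  qed
  have "((\<lambda>z. eta * of_int \<lfloor>y\<rfloor> + eta) has_real_derivative 0) (at y)"
    by (auto intro!: derivative_eq_intros)
  from has_field_derivative_transform_within_open[OF this _ yS eq]
  show ?thesis using False by simp
qed

lemma signal_integral:
  assumes e: "0 < eta" "eta < 1" and D: "Delta > 0" and t: "0 \<le> t"
  shows "((\<lambda>\<tau>. signal eta Delta th \<tau>) has_integral
           (Delta * PP eta ((t - th)/Delta) - Delta * PP eta ((0 - th)/Delta))) {0..t}"
proof -
  define g where "g \<tau> = (\<tau> - th)/Delta" for \<tau>
  define Q where "Q \<tau> = Delta * PP eta (g \<tau>)" for \<tau>
  define S where "S = {\<tau>\<in>{0..t}. frac (g \<tau>) = 0 \<or> frac (g \<tau>) = eta}"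
  have fin: "finite S"
  proof -
    let ?I = "{\<lfloor>g 0\<rfloor>..\<lfloor>g t\<rfloor>}"
    have "S \<subseteq> (\<lambda>n. th + Delta * of_int n) ` ?I \<union> (\<lambda>n. th + Delta * (of_int n + eta)) ` ?I"
    proof
      fix \<tau> assume "\<tau> \<in> S"
      then have \<tau>: "0 \<le> \<tau>" "\<tau> \<le> t" and fr: "frac (g \<tau>) = 0 \<or> frac (g \<tau>) = eta" unfolding S_def by auto
      have "g 0 \<le> g \<tau>" "g \<tau> \<le> g t" using \<tau> D unfolding g_def by (auto simp: divide_right_mono field_simps)
      then have n: "\<lfloor>g \<tau>\<rfloor> \<in> ?I" by (auto intro: floor_mono)
      have eq: "\<tau> = th + Delta * (of_int \<lfloor>g \<tau>\<rfloor> + frac (g \<tau>))" using D unfolding g_def frac_def by simp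
      show "\<tau> \<in> (\<lambda>n. th + Delta * of_int n) ` ?I \<union> (\<lambda>n. th + Delta * (of_int n + eta)) ` ?I"
        using fr
      proof
        assume h: "frac (g \<tau>) = 0"
        from eq h have e2: "\<tau> = th + Delta * of_int \<lfloor>g \<tau>\<rfloor>" by (metis add.right_neutral)
        show ?thesis using n by (intro UnI1 image_eqI[where f="\<lambda>n. th + Delta * of_int n", OF e2])
      next
        assume h: "frac (g \<tau>) = eta"
        from eq h have e2: "\<tau> = th + Delta * (of_int \<lfloor>g \<tau>\<rfloor> + eta)" by metis
        show ?thesis using n by (intro UnI2 image_eqI[where f="\<lambda>n. th + Delta * (of_int n + eta)", OF e2])
      qed
    qed
    then show ?thesis by (rule finite_subset) auto
  qed
  have der: "(Q has_vector_derivative signal eta Delta th \<tau>) (at \<tau>)" if "\<tau> \<in> {0<..<t} - S" for \<tau>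
  proof -
    have fr: "frac (g \<tau>) \<noteq> 0" "frac (g \<tau>) \<noteq> eta" using that unfolding S_def by auto
    have gd: "(g has_real_derivative 1/Delta) (at \<tau>)" unfolding g_def
      using D by (auto intro!: derivative_eq_intros)
    have "((\<lambda>x. PP eta (g x)) has_real_derivative (if frac (g \<tau>) < eta then 1 else 0) * (1/Delta)) (at \<tau>)"
      by (rule DERIV_chain2[OF PP_deriv[OF e fr] gd])
    then have "(Q has_real_derivative Delta * ((if frac (g \<tau>) < eta then 1 else 0) * (1/Delta))) (at \<tau>)"
      unfolding Q_def by (rule DERIV_cmult)
    moreover have "Delta * ((if frac (g \<tau>) < eta then 1 else 0) * (1/Delta)) = signal eta Delta th \<tau>"
      using D unfolding signal_def g_def by simp
    ultimately show ?thesis by (simp add: has_real_derivative_iff_has_vector_derivative)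
  qed
  have cont: "continuous_on {0..t} Q"
  proof -
    have "continuous_on {0..t} g" unfolding g_def using D by (intro continuous_intros) auto
    then have "continuous_on {0..t} (PP eta \<circ> g)" by (rule continuous_on_compose) (rule PP_cont[OF e])
    then show ?thesis unfolding Q_def o_def by (intro continuous_intros)
  qed
  have "((\<lambda>\<tau>. signal eta Delta th \<tau>) has_integral (Q t - Q 0)) {0..t}"
    by (rule fundamental_theorem_of_calculus_interior_strong[OF fin t der cont])
  then show ?thesis unfolding Q_def g_def .
qed

lemma PP_bound: assumes "0 < eta" "eta < 1" shows "0 \<le> PP eta y - eta * y \<and> PP eta y - eta * y \<le> 1"
proof -
  have fy: "y = of_int \<lfloor>y\<rfloor> + frac y" "0 \<le> frac y" "frac y < 1"
    using frac_lt_1[of y] frac_ge_0[of y] by (auto simp: frac_def)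
  have e: "PP eta y - eta * y = min (frac y) eta - eta * frac y"
    unfolding PP_def by (subst (3) fy(1)) (simp add: algebra_simps)
  have h: "eta * frac y \<le> frac y" "eta * frac y \<le> eta" "eta * frac y \<ge> 0"
    using assms fy by (auto simp: mult_left_le_one_le mult_right_le_one_le)
  show ?thesis
  proof (cases "frac y \<le> eta")
    case True then have "min (frac y) eta = frac y" by simp
    then show ?thesis using h fy assms e by (intro conjI; linarith)
  next
    case False then have "min (frac y) eta = eta" by simp
    then show ?thesis using h fy assms e by (intro conjI; linarith)
  qed
qed

lemma down_diff:
  assumes e: "0 < eta" "eta < 1" and D: "Delta > 0" and c: "c > 0"
  shows "\<bar>integral {0..s} (\<lambda>\<tau>. c * signal eta Delta th \<tau>) - integral {0..s} (\<lambda>\<tau>. eta * c)\<bar> \<le> c * Delta"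
proof (cases "0 \<le> s")
  case False
  then show ?thesis using c D by simp
next
  case True
  have "((\<lambda>\<tau>. c * signal eta Delta th \<tau>) has_integral
           c * (Delta * PP eta ((s - th)/Delta) - Delta * PP eta ((0 - th)/Delta))) {0..s}"
    by (rule has_integral_mult_right[OF signal_integral[OF e D True]])
  then have i1: "integral {0..s} (\<lambda>\<tau>. c * signal eta Delta th \<tau>) =
       c * (Delta * PP eta ((s - th)/Delta) - Delta * PP eta ((0 - th)/Delta))"
    by (rule integral_unique)
  have i0: "integral {0..s} (\<lambda>\<tau>. eta * c) = c * (eta * s)" using True by simp
  define y1 where "y1 = (s - th)/Delta"
  define y0 where "y0 = (0 - th)/Delta"
  have sy: "s = Delta * (y1 - y0)" using D unfolding y1_def y0_def by (simp add: field_simps)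
  have "integral {0..s} (\<lambda>\<tau>. c * signal eta Delta th \<tau>) - integral {0..s} (\<lambda>\<tau>. eta * c)
     = c * (Delta * PP eta y1 - Delta * PP eta y0) - c * (eta * s)"
    unfolding i1 i0 y1_def y0_def by simp
  also have "\<dots> = (c * Delta) * ((PP eta y1 - eta * y1) - (PP eta y0 - eta * y0))"
    unfolding sy by (simp add: algebra_simps)
  finally have "integral {0..s} (\<lambda>\<tau>. c * signal eta Delta th \<tau>) - integral {0..s} (\<lambda>\<tau>. eta * c)
     = (c * Delta) * ((PP eta y1 - eta * y1) - (PP eta y0 - eta * y0))" .
  moreover have "\<bar>(PP eta y1 - eta * y1) - (PP eta y0 - eta * y0)\<bar> \<le> 1"
    using PP_bound[OF e, of y1] PP_bound[OF e, of y0] by linarith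
  then have "(c * Delta) * \<bar>(PP eta y1 - eta * y1) - (PP eta y0 - eta * y0)\<bar> \<le> c * Delta"
    using c D by (intro mult_left_le) auto
  moreover have "c * Delta > 0" using c D by simp
  ultimately show ?thesis using c D by (simp only: abs_mult)
qed

theorem theorem4p1:
  fixes f :: "real \<Rightarrow> real" and rhoj v w C1 C3 eta a1 b1 T :: real
    and Nini Nup S3 :: "real \<Rightarrow> real" and theta :: "real \<Rightarrow> real"
  assumes F: "assumption_F f rhoj C1 v w"
    and C1: "C1 > 0" and C3: "C3 > 0"
    and link: "a1 < b1" and T: "T > 0"
    and eta: "0 < eta" "eta < 1"
    and nospill: "\<forall>t. S3 t = C3"
  shows "\<forall>\<epsilon>>0. \<exists>\<delta>>0. \<forall>Delta. 0 < Delta \<and> Delta < \<delta> \<longrightarrow>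
           (\<forall>t\<in>{0..T}. \<forall>x\<in>{a1..b1}.
              let NDelta = lax_hopf f rhoj v w Nini Nup
                    (\<lambda>t. integral {0..t} (\<lambda>\<tau>. min C1 (S3 \<tau>) * signal eta Delta (theta Delta) \<tau>))
                    a1 b1 T t x;
                  N0 = lax_hopf f rhoj v w Nini Nup
                    (\<lambda>t. integral {0..t} (\<lambda>\<tau>. eta * min C1 (S3 \<tau>)))
                    a1 b1 T t x
              in NDelta \<le> N0 + ereal \<epsilon> \<and> N0 \<le> NDelta + ereal \<epsilon>)"
proof (intro allI impI)
  fix \<epsilon> :: real assume ep: "\<epsilon> > 0"
  define c where "c = min C1 C3"
  have c: "c > 0" using C1 C3 unfolding c_def by simp
  show "\<exists>\<delta>>0. \<forall>Delta. 0 < Delta \<and> Delta < \<delta> \<longrightarrow>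
           (\<forall>t\<in>{0..T}. \<forall>x\<in>{a1..b1}.
              let NDelta = lax_hopf f rhoj v w Nini Nup
                    (\<lambda>t. integral {0..t} (\<lambda>\<tau>. min C1 (S3 \<tau>) * signal eta Delta (theta Delta) \<tau>))
                    a1 b1 T t x;
                  N0 = lax_hopf f rhoj v w Nini Nup
                    (\<lambda>t. integral {0..t} (\<lambda>\<tau>. eta * min C1 (S3 \<tau>)))
                    a1 b1 T t x
              in NDelta \<le> N0 + ereal \<epsilon> \<and> N0 \<le> NDelta + ereal \<epsilon>)"
  proof (intro exI[of _ "\<epsilon> / c"] conjI allI impI ballI)
    show "\<epsilon> / c > 0" using ep c by simp
    fix Delta t x assume D: "0 < Delta \<and> Delta < \<epsilon> / c"
    have cD: "c * Delta < \<epsilon>" using D c by (simp add: field_simps)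
    have S: "\<And>\<tau>. min C1 (S3 \<tau>) = c" using nospill unfolding c_def by simp
    have b: "\<bar>integral {0..s} (\<lambda>\<tau>. c * signal eta Delta (theta Delta) \<tau>) - integral {0..s} (\<lambda>\<tau>. eta * c)\<bar> \<le> c * Delta" for s
      using down_diff[OF eta(1,2) _ c, of Delta s "theta Delta"] D by simp
    have b1: "integral {0..s} (\<lambda>\<tau>. c * signal eta Delta (theta Delta) \<tau>) \<le> integral {0..s} (\<lambda>\<tau>. eta * c) + \<epsilon>" for s
      using b[of s] cD by linarith
    have b2: "integral {0..s} (\<lambda>\<tau>. eta * c) \<le> integral {0..s} (\<lambda>\<tau>. c * signal eta Delta (theta Delta) \<tau>) + \<epsilon>" for s
      using b[of s] cD by linarith
    show "let NDelta = lax_hopf f rhoj v w Nini Nup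
                    (\<lambda>t. integral {0..t} (\<lambda>\<tau>. min C1 (S3 \<tau>) * signal eta Delta (theta Delta) \<tau>))
                    a1 b1 T t x;
                  N0 = lax_hopf f rhoj v w Nini Nup
                    (\<lambda>t. integral {0..t} (\<lambda>\<tau>. eta * min C1 (S3 \<tau>)))
                    a1 b1 T t x
              in NDelta \<le> N0 + ereal \<epsilon> \<and> N0 \<le> NDelta + ereal \<epsilon>"
      unfolding Let_def S by (intro conjI lh_mono ep b1 b2)
  qed
qed

end
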